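(* Let $S_1$ and $S_2$ be semigroups with finite generating sets $A_1$ and $A_2$ respectively. If $(S_1,d_{A_1})$ quasi-isometrically embeds into $(S_2,d_{A_2})$ and $(S_2,d_{A_2})$ quasi-isometrically embeds into $(S_1,d_{A_1})$, then $S_1$ and $S_2$ have the same growth type. In particular, growth type is a quasi-isometry invariant of finitely generated semigroups.
   Context: For a semigroup $S$ generated by a finite set $A$, $d_A(x,y)=\inf\{|w|:w\in A^*,\ xw=y\}$ ($A^*$ the free monoid on $A$, $\inf\emptyset=\infty$), a not necessarily symmetric distance with values in $\mathbb{R}^{\ge0}\cup\{\infty\}$. A map $f:X\to X'$ of such spaces is a quasi-isometric embedding if there are $1\le\lambda<\infty$, $0<\epsilon<\infty$ with $\frac1\lambda d(x,y)-\epsilon\le d'(f(x),f(y))\le\lambda d(x,y)+\epsilon$ for all $x,y$; it is a quasi-isometry if in addition there is $0\le\mu<\infty$ such that every $x'\in X'$ has some $x$ with $\max(d'(x',f(x)),d'(f(x),x'))\le\mu$. Semigroups $S,T$ are quasi-isometric if $(S,d_A)$, $(T,d_B)$ are quasi-isometric for some finite generating sets $A,B$. A growth function is a monotone non-decreasing function $\mathbb{N}\to\mathbb{N}$; write $\alpha_1\preccurlyeq\alpha_2$ if there are natural numbers $k_1,k_2\ge1$ with $\alpha_1(t)\le k_1\alpha_2(k_2t)$ for all $t$, and $\alpha_1\sim\alpha_2$ if $\alpha_1\preccurlyeq\alpha_2$ and $\alpha_2\preccurlyeq\alpha_1$; the growth type of $\alpha$ is its $\sim$-class. The growth function of $S$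 with respect to $A$ is $g_S(m)=|\{z\in S: l_A(z)\le m\}|$, where $l_A(z)$ is the minimal length of a nonempty word over $A$ representing $z$; its growth type (the growth type of $S$) does not depend on the finite generating set. *)

theory Defs
  imports "HOL-Library.Extended_Real"
begin

definition word_prod :: "'a::semigroup_mult list \<Rightarrow> 'a" where
  "word_prod w = foldl (*) (hd w) (tl w)"

definition generates :: "'a::semigroup_mult set \<Rightarrow> bool" where
  "generates A \<longleftrightarrow> (\<forall>z. \<exists>w. w \<noteq> [] \<and> set w \<subseteq> A \<and> word_prod w = z)"

definition fin_gen :: "'a::semigroup_mult set \<Rightarrow> bool" where
  "fin_gen A \<longleftrightarrow> finite A \<and> generates A"

text \<open>d_A(x,y) = inf of lengths of words w over A (possibly empty) with x w = y;
  inf of the empty set is infinity.\<close>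
definition sdist :: "'a::semigroup_mult set \<Rightarrow> 'a \<Rightarrow> 'a \<Rightarrow> enat" where
  "sdist A x y = (INF w \<in> {w. set w \<subseteq> A \<and> foldl (*) x w = y}. enat (length w))"

definition qi_embedding ::
  "'a::semigroup_mult set \<Rightarrow> 'b::semigroup_mult set \<Rightarrow> ('a \<Rightarrow> 'b) \<Rightarrow> bool" where
  "qi_embedding A B f \<longleftrightarrow>
     (\<exists>(lam::real) (eps::real). 1 \<le> lam \<and> 0 < eps \<and>
        (\<forall>x y. ereal (1/lam) * ereal_of_enat (sdist A x y) - ereal eps
                  \<le> ereal_of_enat (sdist B (f x) (f y))
              \<and> ereal_of_enat (sdist B (f x) (f y))
                  \<le> ereal lam * ereal_of_enat (sdist A x y) + ereal eps))"

definition quasi_isometry ::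
  "'a::semigroup_mult set \<Rightarrow> 'b::semigroup_mult set \<Rightarrow> ('a \<Rightarrow> 'b) \<Rightarrow> bool" where
  "quasi_isometry A B f \<longleftrightarrow> qi_embedding A B f \<and>
     (\<exists>(mu::real). 0 \<le> mu \<and> (\<forall>x'. \<exists>x.
        max (ereal_of_enat (sdist B x' (f x))) (ereal_of_enat (sdist B (f x) x')) \<le> ereal mu))"

definition word_length :: "'a::semigroup_mult set \<Rightarrow> 'a \<Rightarrow> enat" where
  "word_length A z = (INF w \<in> {w. w \<noteq> [] \<and> set w \<subseteq> A \<and> word_prod w = z}. enat (length w))"

definition growth :: "'a::semigroup_mult set \<Rightarrow> nat \<Rightarrow> nat" where
  "growth A m = card {z. word_length A z \<le> enat m}"

definition growth_le :: "(nat \<Rightarrow> nat) \<Rightarrow> (nat \<Rightarrow> nat) \<Rightarrow> bool" where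
  "growth_le a1 a2 \<longleftrightarrow> (\<exists>k1 k2::nat. 1 \<le> k1 \<and> 1 \<le> k2 \<and> (\<forall>t. a1 t \<le> k1 * a2 (k2 * t)))"

definition growth_equiv :: "(nat \<Rightarrow> nat) \<Rightarrow> (nat \<Rightarrow> nat) \<Rightarrow> bool" where
  "growth_equiv a1 a2 \<longleftrightarrow> growth_le a1 a2 \<and> growth_le a2 a1"

end

theory Submission
  imports Defs
begin

lemma INF_enat_attained:
  assumes "S \<noteq> {}"
  shows "\<exists>w\<in>S. (INF w\<in>S. enat (g w)) = enat (g w)"
proof -
  have ne: "(\<lambda>w. enat (g w)) ` S \<noteq> {}" using assms by auto
  then obtain y where y: "y \<in> (\<lambda>w. enat (g w)) ` S" by blast
  have "(LEAST x. x \<in> (\<lambda>w. enat (g w)) ` S) \<in> (\<lambda>w. enat (g w)) ` S"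
    using y by (rule LeastI)
  then show ?thesis using ne unfolding Inf_enat_def by auto
qed

lemma sdist_le: "set w \<subseteq> A \<Longrightarrow> foldl (*) x w = y \<Longrightarrow> sdist A x y \<le> enat (length w)"
  unfolding sdist_def by (rule INF_lower2[of w]) auto

lemma sdist_obtain:
  assumes "sdist A x y \<le> enat n"
  shows "\<exists>w. set w \<subseteq> A \<and> foldl (*) x w = y \<and> length w \<le> n"
proof -
  let ?S = "{w. set w \<subseteq> A \<and> foldl (*) x w = y}"
  have "?S \<noteq> {}"
  proof
    assume "?S = {}"
    then have "sdist A x y = \<infinity>" unfolding sdist_def by (metis INF_empty top_enat_def)
    with assms show False by simp
  qed
  from INF_enat_attained[OF this, of length] obtain w where "w \<in> ?S"
    "sdist A x y = enat (length w)" unfolding sdist_def by auto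
  then show ?thesis using assms by auto
qed

lemma wl_le: "w \<noteq> [] \<Longrightarrow> set w \<subseteq> A \<Longrightarrow> word_prod w = z \<Longrightarrow> word_length A z \<le> enat (length w)"
  unfolding word_length_def by (rule INF_lower2[of w]) auto

lemma wl_obtain:
  assumes "word_length A z \<le> enat n"
  shows "\<exists>w. w \<noteq> [] \<and> set w \<subseteq> A \<and> word_prod w = z \<and> length w \<le> n"
proof -
  let ?S = "{w. w \<noteq> [] \<and> set w \<subseteq> A \<and> word_prod w = z}"
  have "?S \<noteq> {}"
  proof
    assume "?S = {}"
    then have "word_length A z = \<infinity>" unfolding word_length_def by (metis INF_empty top_enat_def)
    with assms show False by simp
  qed
  from INF_enat_attained[OF this, of length] obtain w where "w \<in> ?S"
    "word_length A z = enat (length w)" unfolding word_length_def by auto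
  then show ?thesis using assms by auto
qed

lemma wl_sdist:
  assumes "word_length A x \<le> enat p" "sdist A x y \<le> enat q"
  shows "word_length A y \<le> enat (p + q)"
proof -
  obtain u where u: "u \<noteq> []" "set u \<subseteq> A" "word_prod u = x" "length u \<le> p"
    using wl_obtain[OF assms(1)] by blast
  obtain v where v: "set v \<subseteq> A" "foldl (*) x v = y" "length v \<le> q"
    using sdist_obtain[OF assms(2)] by blast
  have "word_prod (u @ v) = y" using u v
    by (cases u) (auto simp: word_prod_def)
  then have "word_length A y \<le> enat (length (u @ v))"
    using u v by (intro wl_le) auto
  also have "\<dots> \<le> enat (p + q)" using u v by simp
  finally show ?thesis .
qed

lemma wl_first:
  assumes "word_length A z \<le> enat m"
  shows "\<exists>a\<in>A. sdist A a z \<le> enat m"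
proof -
  obtain w where w: "w \<noteq> []" "set w \<subseteq> A" "word_prod w = z" "length w \<le> m"
    using wl_obtain[OF assms] by blast
  then obtain a w' where "w = a # w'" by (cases w) auto
  with w have "a \<in> A" "sdist A a z \<le> enat (length w')"
    by (auto simp: word_prod_def intro!: sdist_le)
  moreover have "length w' \<le> m" using w \<open>w = a # w'\<close> by simp
  ultimately show ?thesis by (meson enat_ord_simps(1) order_trans)
qed

lemma wl_pos: "word_length A z \<le> enat m \<Longrightarrow> m \<ge> 1"
  using wl_obtain[of A z m] by (metis One_nat_def Suc_leI length_greater_0_conv order.strict_trans2)

lemma sdist_trans:
  assumes "sdist A x y \<le> enat p" "sdist A y z \<le> enat q"
  shows "sdist A x z \<le> enat (p + q)"
proof -
  obtain u where u: "set u \<subseteq> A" "foldl (*) x u = y" "length u \<le> p"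
    using sdist_obtain[OF assms(1)] by blast
  obtain v where v: "set v \<subseteq> A" "foldl (*) y v = z" "length v \<le> q"
    using sdist_obtain[OF assms(2)] by blast
  have "sdist A x z \<le> enat (length (u @ v))" using u v by (intro sdist_le) auto
  also have "\<dots> \<le> enat (p + q)" using u v by simp
  finally show ?thesis .
qed

lemma sdist_refl: "sdist A x x \<le> enat 0"
  using sdist_le[of "[]" A x x] by simp

lemma outball:
  assumes "finite A"
  shows "finite {y. sdist A x y \<le> enat n} \<and> card {y. sdist A x y \<le> enat n} \<le> card {w. set w \<subseteq> A \<and> length w \<le> n}"
proof -
  have sub: "{y. sdist A x y \<le> enat n} \<subseteq> foldl (*) x ` {w. set w \<subseteq> A \<and> length w \<le> n}"
    using sdist_obtain by fastforce
  have fin: "finite {w. set w \<subseteq> A \<and> length w \<le> n}" using finite_lists_length_le[OF assms] .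
  show ?thesis
    using finite_subset[OF sub] fin card_mono[OF _ sub] card_image_le[OF fin, of "foldl (*) x"]
    by (meson finite_imageI le_trans)
qed

lemma ereal_to_enat: "ereal_of_enat e \<le> ereal r \<Longrightarrow> e \<le> enat (nat \<lceil>r\<rceil>)"
proof (cases e)
  case (enat k)
  assume "ereal_of_enat e \<le> ereal r"
  then have "real k \<le> r" using enat by simp
  then have "k \<le> nat \<lceil>r\<rceil>" by linarith
  then show ?thesis using enat by simp
qed simp

lemma enat_to_ereal: "e \<le> enat n \<Longrightarrow> ereal_of_enat e \<le> ereal (real n)"
  by (cases e) auto

lemma qi_bounds:
  assumes "qi_embedding A B f"
  shows "\<exists>L E. (\<forall>x y n. sdist A x y \<le> enat n \<longrightarrow> sdist B (f x) (f y) \<le> enat (L*n+E))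
     \<and> (\<forall>x y n. sdist B (f x) (f y) \<le> enat n \<longrightarrow> sdist A x y \<le> enat (L*n + L*E))"
proof -
  obtain lam eps where le: "1 \<le> lam" "0 < eps" and
    H: "\<And>x y. ereal (1/lam) * ereal_of_enat (sdist A x y) - ereal eps
                  \<le> ereal_of_enat (sdist B (f x) (f y))
              \<and> ereal_of_enat (sdist B (f x) (f y))
                  \<le> ereal lam * ereal_of_enat (sdist A x y) + ereal eps"
    using assms unfolding qi_embedding_def by blast
  define L where "L = nat \<lceil>lam\<rceil>"
  define E where "E = nat \<lceil>eps\<rceil>"
  have L: "lam \<le> real L" unfolding L_def by linarith
  have E: "eps \<le> real E" unfolding E_def by linarith
  have 1: "sdist B (f x) (f y) \<le> enat (L*n+E)" if "sdist A x y \<le> enat n" for x y n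
  proof -
    have "\<exists>k. sdist A x y = enat k \<and> k \<le> n" using that by (cases "sdist A x y") auto
    then obtain k where k: "sdist A x y = enat k" "k \<le> n" by blast
    have "ereal_of_enat (sdist B (f x) (f y)) \<le> ereal (lam * real k + eps)"
      using H[of x y] k by simp
    then have "sdist B (f x) (f y) \<le> enat (nat \<lceil>lam * real k + eps\<rceil>)" by (rule ereal_to_enat)
    moreover have "lam * real k + eps \<le> real (L*n+E)"
    proof -
      have "lam * real k \<le> real L * real n" using L k le
        by (intro mult_mono) auto
      then show ?thesis using E by simp
    qed
    then have "nat \<lceil>lam * real k + eps\<rceil> \<le> L*n+E" by linarith
    ultimately show ?thesis by (meson enat_ord_simps(1) order_trans)
  qed
  have 2: "sdist A x y \<le> enat (L*n + L*E)" if "sdist B (f x) (f y) \<le> enat n" for x y n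
  proof -
    have up: "ereal (1/lam) * ereal_of_enat (sdist A x y) - ereal eps \<le> ereal (real n)"
    proof -
      have "ereal (1/lam) * ereal_of_enat (sdist A x y) - ereal eps \<le> ereal_of_enat (sdist B (f x) (f y))"
        using H[of x y] by blast
      also have "\<dots> \<le> ereal (real n)" using enat_to_ereal[OF that] .
      finally show ?thesis .
    qed
    show ?thesis
    proof (cases "sdist A x y")
      case (enat k)
      with up have "real k / lam - eps \<le> real n" by simp
      then have "real k \<le> lam * (real n + eps)" using le by (simp add: field_simps)
      also have "\<dots> \<le> real L * (real n + real E)" using L E le by (intro mult_mono) auto
      also have "\<dots> = real (L*n + L*E)" by (simp add: algebra_simps)
      finally have "k \<le> L*n + L*E" by (simp only: of_nat_le_iff)
      then show ?thesis using enat by simp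
    next
      case infinity
      have "ereal (1/lam) * \<infinity> = \<infinity>" using le by simp
      with up infinity show ?thesis by simp
    qed
  qed
  from 1 2 show ?thesis by blast
qed

lemma card_fibers:
  assumes "\<And>y. finite {z. h z = y} \<and> card {z. h z = y} \<le> K"
  shows "card X \<le> K * card (h ` X)"
proof (cases "finite X")
  case True
  have "X = (\<Union>y\<in>h ` X. {z\<in>X. h z = y})" by auto
  then have "card X \<le> (\<Sum>y\<in>h ` X. card {z\<in>X. h z = y})"
    by (metis True card_UN_le finite_imageI)
  also have "\<dots> \<le> of_nat (card (h ` X)) * K"
  proof (rule sum_bounded_above)
    fix y
    have "card {z\<in>X. h z = y} \<le> card {z. h z = y}" using assms[of y] by (intro card_mono) auto
    then show "card {z\<in>X. h z = y} \<le> K" using assms[of y] by linarith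
  qed
  finally show ?thesis by (simp add: mult.commute)
qed simp

lemma wl_ball_finite:
  assumes "finite B"
  shows "finite {z. word_length B z \<le> enat n}"
proof -
  have "{z. word_length B z \<le> enat n} \<subseteq> word_prod ` {w. set w \<subseteq> B \<and> length w \<le> n}"
    using wl_obtain by fastforce
  then show ?thesis using finite_lists_length_le[OF assms] finite_subset by blast
qed

lemma growth_le_map:
  assumes "finite B"
    and bound: "\<And>z m. word_length A z \<le> enat m \<Longrightarrow> word_length B (h z) \<le> enat (c*m + d)"
    and fib: "\<And>y. finite {z. h z = y} \<and> card {z. h z = y} \<le> K"
  shows "growth_le (growth A) (growth B)"
  unfolding growth_le_def
proof (intro exI conjI allI)
  show "1 \<le> K+1" "1 \<le> c+d+1" by auto
  fix t
  let ?X = "{z. word_length A z \<le> enat t}"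
  let ?Y = "{z. word_length B z \<le> enat ((c+d+1)*t)}"
  have sub: "h ` ?X \<subseteq> ?Y"
  proof
    fix y assume "y \<in> h ` ?X"
    then obtain z where z: "word_length A z \<le> enat t" "y = h z" by auto
    have "t \<ge> 1" using wl_pos[OF z(1)] .
    have "d \<le> d * t" using \<open>t \<ge> 1\<close> by simp
    moreover have "(c+d+1)*t = c*t + d*t + t" by (simp add: algebra_simps)
    ultimately have "c*t + d \<le> (c+d+1)*t" by linarith
    then show "y \<in> ?Y" using bound[OF z(1)] z(2) by (meson enat_ord_simps(1) mem_Collect_eq order_trans)
  qed
  have "growth A t = card ?X" unfolding growth_def ..
  also have "\<dots> \<le> K * card (h ` ?X)" by (rule card_fibers[OF fib])
  also have "\<dots> \<le> K * card ?Y" using card_mono[OF wl_ball_finite[OF assms(1)] sub] by simp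
  also have "\<dots> \<le> (K+1) * growth B ((c+d+1)*t)" unfolding growth_def by simp
  finally show "growth A t \<le> (K+1) * growth B ((c+d+1)*t)" .
qed

lemma gen_bounded:
  assumes "finite S" "generates B"
  shows "\<exists>C. \<forall>a\<in>S. word_length B (g a) \<le> enat C"
proof -
  have "\<forall>a\<in>S. \<exists>n. word_length B (g a) \<le> enat n"
  proof
    fix a assume "a \<in> S"
    obtain w where "w \<noteq> []" "set w \<subseteq> B" "word_prod w = g a"
      using assms(2) unfolding generates_def by blast
    then show "\<exists>n. word_length B (g a) \<le> enat n" using wl_le by blast
  qed
  then obtain n where n: "\<forall>a\<in>S. word_length B (g a) \<le> enat (n a)" by metis
  show ?thesis
  proof (intro exI ballI)
    fix a assume "a \<in> S"
    then have "n a \<le> Max (n ` S)" using assms(1) by simp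
    then show "word_length B (g a) \<le> enat (Max (n ` S))" using n \<open>a \<in> S\<close>
      by (meson enat_ord_simps(1) order_trans)
  qed
qed

lemma growth_le_trans: "growth_le a b \<Longrightarrow> growth_le b c \<Longrightarrow> growth_le a c"
  unfolding growth_le_def
proof (elim exE conjE)
  fix k1 k2 k1' k2' :: nat
  assume h: "1 \<le> k1" "1 \<le> k2" "\<forall>t. a t \<le> k1 * b (k2 * t)"
     "1 \<le> k1'" "1 \<le> k2'" "\<forall>t. b t \<le> k1' * c (k2' * t)"
  show "\<exists>k1 k2. 1 \<le> k1 \<and> 1 \<le> k2 \<and> (\<forall>t. a t \<le> k1 * c (k2 * t))"
  proof (intro exI conjI allI)
    show "1 \<le> k1 * k1'" "1 \<le> k2' * k2" using h by auto
    fix t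
    have "a t \<le> k1 * b (k2 * t)" using h by blast
    also have "\<dots> \<le> k1 * (k1' * c (k2' * (k2 * t)))"
    proof (rule mult_le_mono2)
      show "b (k2 * t) \<le> k1' * c (k2' * (k2 * t))" using h(6) by blast
    qed
    also have "\<dots> = k1 * k1' * c (k2' * k2 * t)" by (simp only: mult.assoc)
    finally show "a t \<le> k1 * k1' * c (k2' * k2 * t)" .
  qed
qed

lemma qi_growth:
  assumes "fin_gen A" "fin_gen B" "qi_embedding A B f"
  shows "growth_le (growth A) (growth B)"
proof -
  obtain L E where U: "\<forall>x y n. sdist A x y \<le> enat n \<longrightarrow> sdist B (f x) (f y) \<le> enat (L*n+E)"
    and Lo: "\<forall>x y n. sdist B (f x) (f y) \<le> enat n \<longrightarrow> sdist A x y \<le> enat (L*n + L*E)"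
    using qi_bounds[OF assms(3)] by blast
  obtain C where C: "\<forall>a\<in>A. word_length B (f a) \<le> enat C"
    using gen_bounded[of A B f] assms unfolding fin_gen_def by blast
  show ?thesis
  proof (rule growth_le_map[where c=L and d="C+E" and h=f and K="card {w. set w \<subseteq> A \<and> length w \<le> L*0 + L*E}"])
    show "finite B" using assms unfolding fin_gen_def by blast
  next
    fix z m assume "word_length A z \<le> enat m"
    then obtain a where a: "a \<in> A" "sdist A a z \<le> enat m" using wl_first by blast
    then have "sdist B (f a) (f z) \<le> enat (L*m+E)" using U by blast
    have "C + (L * m + E) = L * m + (C + E)" by simp
    then show "word_length B (f z) \<le> enat (L * m + (C + E))" using wl_sdist[OF C[rule_format, OF a(1)] \<open>sdist B (f a) (f z) \<le> enat (L*m+E)\<close>] by metis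
  next
    fix y
    show "finite {z. f z = y} \<and> card {z. f z = y} \<le> card {w. set w \<subseteq> A \<and> length w \<le> L*0 + L*E}"
    proof (cases "\<exists>x. f x = y")
      case True
      then obtain x where x: "f x = y" by blast
      have sub: "{z. f z = y} \<subseteq> {z. sdist A x z \<le> enat (L*0 + L*E)}"
      proof
        fix z assume "z \<in> {z. f z = y}"
        then have "sdist B (f x) (f z) \<le> enat 0" using x sdist_refl by simp
        then show "z \<in> {z. sdist A x z \<le> enat (L*0 + L*E)}" using Lo by blast
      qed
      have "finite A" using assms unfolding fin_gen_def by blast
      note ob = outball[OF this, of x "L*0+L*E"]
      have fin: "finite {z. f z = y}" using ob sub by (blast intro: finite_subset)
      have "card {z. f z = y} \<le> card {z. sdist A x z \<le> enat (L*0 + L*E)}"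
        using ob sub by (intro card_mono) auto
      with ob fin show ?thesis by linarith
    next
      case False
      then show ?thesis by simp
    qed
  qed
qed

lemma foldl_mult: "foldl (*) (x*y) w = x * foldl (*) (y::'a::semigroup_mult) w"
  by (induction w arbitrary: y) (auto simp: mult.assoc)

lemma foldl_word_prod: "v \<noteq> [] \<Longrightarrow> foldl (*) x v = x * word_prod v"
  by (cases v) (auto simp: word_prod_def foldl_mult)

lemma word_prod_snoc: "w \<noteq> [] \<Longrightarrow> word_prod (w @ [a]) = word_prod w * a"
  by (cases w) (auto simp: word_prod_def)

lemma gen_change:
  fixes A B :: "'a::semigroup_mult set"
  assumes "fin_gen A" "fin_gen B"
  shows "growth_le (growth A) (growth B)"
proof -
  obtain C where C: "\<forall>a\<in>A. word_length B a \<le> enat C"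
    using gen_bounded[of A B "\<lambda>x. x"] assms unfolding fin_gen_def by blast
  have step: "sdist B x (x*a) \<le> enat C" if "a \<in> A" for x a
  proof -
    have "word_length B a \<le> enat C" using C that by blast
    then obtain v where v: "v \<noteq> []" "set v \<subseteq> B" "word_prod v = a" "length v \<le> C"
      using wl_obtain by blast
    have "sdist B x (x*a) \<le> enat (length v)" using v foldl_word_prod[OF v(1), of x]
      by (intro sdist_le) auto
    then show ?thesis using v by (meson enat_ord_simps(1) order_trans)
  qed
  have main: "w \<noteq> [] \<longrightarrow> set w \<subseteq> A \<longrightarrow> word_length B (word_prod w) \<le> enat (C * length w)" for w
  proof (induction w rule: rev_induct)
    case Nil then show ?case by simp
  next
    case (snoc a w)
    show ?case
    proof (intro impI)
      assume "set (w @ [a]) \<subseteq> A"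
      then have a: "a \<in> A" and wA: "set w \<subseteq> A" by auto
      show "word_length B (word_prod (w @ [a])) \<le> enat (C * length (w @ [a]))"
      proof (cases "w = []")
        case True
        have "word_length B a \<le> enat C" using C a by blast
        moreover have "word_prod (w @ [a]) = a" "C * length (w @ [a]) = C" using True by (auto simp: word_prod_def)
        ultimately show ?thesis by (simp only:)
      next
        case False
        have ih: "word_length B (word_prod w) \<le> enat (C * length w)" using snoc.IH False wA by blast
        have e1: "C * length w + C = C * length (w @ [a])" by simp
        have e2: "word_prod w * a = word_prod (w @ [a])" using word_prod_snoc[OF False] by simp
        from wl_sdist[OF ih step[OF a]] show ?thesis unfolding e1 e2 .
      qed
    qed
  qed
  show ?thesis
  proof (rule growth_le_map[where c=C and d=0 and h="\<lambda>x. x" and K=1])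
    show "finite B" using assms unfolding fin_gen_def by blast
  next
    fix z m assume "word_length A z \<le> enat m"
    then obtain w where w: "w \<noteq> []" "set w \<subseteq> A" "word_prod w = z" "length w \<le> m"
      using wl_obtain by blast
    then have "word_length B z \<le> enat (C * length w)" using main by blast
    moreover have "C * length w \<le> C * m" using w by simp
    then have "enat (C * length w) \<le> enat (C * m + 0)" by simp
    ultimately show "word_length B z \<le> enat (C * m + 0)" by (rule order_trans)
  qed simp
qed

lemma qs_growth:
  assumes "fin_gen B1" "fin_gen B2" "quasi_isometry B1 B2 f"
  shows "growth_le (growth B2) (growth B1)"
proof -
  have qi: "qi_embedding B1 B2 f" and
    "\<exists>mu. 0 \<le> mu \<and> (\<forall>x'. \<exists>x. max (ereal_of_enat (sdist B2 x' (f x))) (ereal_of_enat (sdist B2 (f x) x')) \<le> ereal mu)"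
    using assms(3) unfolding quasi_isometry_def by blast+
  then obtain mu where mu: "\<And>x'. \<exists>x. max (ereal_of_enat (sdist B2 x' (f x))) (ereal_of_enat (sdist B2 (f x) x')) \<le> ereal mu"
    by blast
  define h where "h x' = (SOME x. max (ereal_of_enat (sdist B2 x' (f x))) (ereal_of_enat (sdist B2 (f x) x')) \<le> ereal mu)" for x'
  define M where "M = nat \<lceil>mu\<rceil>"
  have hM: "sdist B2 x' (f (h x')) \<le> enat M \<and> sdist B2 (f (h x')) x' \<le> enat M" for x'
  proof -
    have "max (ereal_of_enat (sdist B2 x' (f (h x')))) (ereal_of_enat (sdist B2 (f (h x')) x')) \<le> ereal mu"
      unfolding h_def by (rule someI_ex[OF mu])
    then have "ereal_of_enat (sdist B2 x' (f (h x'))) \<le> ereal mu" "ereal_of_enat (sdist B2 (f (h x')) x') \<le> ereal mu"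
      by auto
    then show ?thesis unfolding M_def using ereal_to_enat by blast
  qed
  obtain L E where Lo: "\<forall>x y n. sdist B2 (f x) (f y) \<le> enat n \<longrightarrow> sdist B1 x y \<le> enat (L*n + L*E)"
    using qi_bounds[OF qi] by blast
  obtain C where C: "\<forall>b\<in>B2. word_length B1 (h b) \<le> enat C"
    using gen_bounded[of B2 B1 h] assms unfolding fin_gen_def by blast
  show ?thesis
  proof (rule growth_le_map[where c=L and d="C + L*(M+M) + L*E" and h=h and K="card {w. set w \<subseteq> B2 \<and> length w \<le> M}"])
    show "finite B1" using assms unfolding fin_gen_def by blast
  next
    fix z m assume "word_length B2 z \<le> enat m"
    then obtain b where b: "b \<in> B2" "sdist B2 b z \<le> enat m" using wl_first by blast
    have "sdist B2 (f (h b)) z \<le> enat (M + m)" using sdist_trans hM b(2) by blast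
    then have "sdist B2 (f (h b)) (f (h z)) \<le> enat (M + m + M)" using sdist_trans hM by blast
    then have "sdist B1 (h b) (h z) \<le> enat (L*(M + m + M) + L*E)" using Lo by blast
    from wl_sdist[OF C[rule_format, OF b(1)] this]
    have "word_length B1 (h z) \<le> enat (C + (L * (M + m + M) + L * E))" .
    moreover have "C + (L * (M + m + M) + L * E) = L * m + (C + L*(M+M) + L*E)"
      by (simp add: algebra_simps)
    ultimately show "word_length B1 (h z) \<le> enat (L * m + (C + L*(M+M) + L*E))" by simp
  next
    fix y
    have sub: "{z. h z = y} \<subseteq> {z. sdist B2 (f y) z \<le> enat M}" using hM by blast
    have "finite B2" using assms unfolding fin_gen_def by blast
    note ob = outball[OF this, of "f y" M]
    have fin: "finite {z. h z = y}" using ob sub by (blast intro: finite_subset)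
    have "card {z. h z = y} \<le> card {z. sdist B2 (f y) z \<le> enat M}"
      using ob sub by (intro card_mono) auto
    with ob fin show "finite {z. h z = y} \<and> card {z. h z = y} \<le> card {w. set w \<subseteq> B2 \<and> length w \<le> M}"
      by linarith
  qed
qed

theorem theorem6p5:
  fixes A1 :: "'a::semigroup_mult set" and A2 :: "'b::semigroup_mult set"
  assumes "fin_gen A1" and "fin_gen A2"
  shows "((\<exists>f. qi_embedding A1 A2 f) \<and> (\<exists>g. qi_embedding A2 A1 g)
            \<longrightarrow> growth_equiv (growth A1) (growth A2))
       \<and> ((\<exists>B1 B2 f. fin_gen (B1 :: 'a set) \<and> fin_gen (B2 :: 'b set) \<and> quasi_isometry B1 B2 f)
            \<longrightarrow> growth_equiv (growth A1) (growth A2))"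
proof (intro conjI impI)
  assume "(\<exists>f. qi_embedding A1 A2 f) \<and> (\<exists>g. qi_embedding A2 A1 g)"
  then obtain f g where f: "qi_embedding A1 A2 f" and g: "qi_embedding A2 A1 g" by blast
  show "growth_equiv (growth A1) (growth A2)"
    unfolding growth_equiv_def using qi_growth[OF assms f] qi_growth[OF assms(2,1) g] by blast
next
  assume "\<exists>B1 B2 f. fin_gen (B1 :: 'a set) \<and> fin_gen (B2 :: 'b set) \<and> quasi_isometry B1 B2 f"
  then obtain B1 :: "'a set" and B2 :: "'b set" and f where
    B: "fin_gen B1" "fin_gen B2" and q: "quasi_isometry B1 B2 f" by blast
  have qi: "qi_embedding B1 B2 f" using q unfolding quasi_isometry_def by blast
  have 1: "growth_le (growth A1) (growth A2)"
    by (rule growth_le_trans[OF gen_change[OF assms(1) B(1)]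
        growth_le_trans[OF qi_growth[OF B qi] gen_change[OF B(2) assms(2)]]])
  have 2: "growth_le (growth A2) (growth A1)"
    by (rule growth_le_trans[OF gen_change[OF assms(2) B(2)]
        growth_le_trans[OF qs_growth[OF B q] gen_change[OF B(1) assms(1)]]])
  show "growth_equiv (growth A1) (growth A2)" unfolding growth_equiv_def using 1 2 by blast
qed

end
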